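(* For an index $i\geq k$ (and $i<s$), the following hold: if $i<s-2$, then $\tilde\Lambda$ has no order-$i$ seeds; if $i=s-2$, then the only order-$i$ seed of $\tilde\Lambda$ is $\lambda_s+1$; if $i=s-1$, then the only order-$i$ seeds of $\tilde\Lambda$ are $\lambda_s+1$ and $\lambda_s+2$.
   Context: A numerical semigroup is a subset $\Lambda\subseteq\mathbb{N}_0$ containing $0$, closed under addition, with finite complement; its genus $g$ is the number of gaps (elements of $\mathbb{N}_0\setminus\Lambda$). Write $\Lambda=\{\lambda_i\}_{i\geq 0}$ with $0=\lambda_0<\lambda_1<\lambda_2<\cdots$; let $k$ be the smallest index with $\lambda_i=i+g$ for all $i\geq k$, and $c=\lambda_k=k+g$ the conductor. A generator of a numerical semigroup is a non-zero element that is not the sum of two non-zero elements of it. Fix an element $\lambda_s$ with $s\geq k$ that is a generator of $\Lambda$ (an order-zero seed), and let $\tilde\Lambda=\Lambda\setminus\{\lambda_s\}$, a numerical semigroup of genus $g+1$ with elements $\tilde\lambda_i=\lambda_i$ for $i<s$, $\tilde\lambda_i=\lambda_{i+1}$ for $i\geq s$, and conductor $\lambda_s+1$. For $0\leq i<s$, an order-$i$ seed of $\tilde\Lambda$ is an element $\lambda_t$ with $t>s$ such that $\lambda_t+\lambda_i$ is a generator of $\tilde\Lambda_i=\Lambda\setminus\{\lambda_1,\dots,\lambda_i,\lambda_s\}$. *)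

theory Defs
  imports Main "HOL-Library.Infinite_Set"
begin

definition numerical_semigroup :: "nat set \<Rightarrow> bool" where
  "numerical_semigroup L \<longleftrightarrow> 0 \<in> L \<and> (\<forall>a\<in>L. \<forall>b\<in>L. a + b \<in> L) \<and> finite (UNIV - L)"

text \<open>lambda_i: the i-th element of L in increasing order (lambda_0 = 0).\<close>
definition elem :: "nat set \<Rightarrow> nat \<Rightarrow> nat" where
  "elem L i = enumerate L i"

definition genus :: "nat set \<Rightarrow> nat" where
  "genus L = card (UNIV - L)"

definition cond_index :: "nat set \<Rightarrow> nat" where
  "cond_index L = (LEAST k. \<forall>i\<ge>k. elem L i = i + genus L)"

definition generator :: "nat set \<Rightarrow> nat \<Rightarrow> bool" where
  "generator L x \<longleftrightarrow> x \<in> L \<and> x \<noteq> 0 \<and>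
     \<not> (\<exists>a\<in>L. \<exists>b\<in>L. a \<noteq> 0 \<and> b \<noteq> 0 \<and> x = a + b)"

definition tilde_i :: "nat set \<Rightarrow> nat \<Rightarrow> nat \<Rightarrow> nat set" where
  "tilde_i L s i = L - ({elem L j | j. 1 \<le> j \<and> j \<le> i} \<union> {elem L s})"

text \<open>Order-i seeds of Lambda_tilde = Lambda minus {lambda_s}.\<close>
definition seeds :: "nat set \<Rightarrow> nat \<Rightarrow> nat \<Rightarrow> nat set" where
  "seeds L s i = {elem L t | t. t > s \<and> generator (tilde_i L s i) (elem L t + elem L i)}"

end

theory Submission
  imports Defs
begin

lemma card_below_enum:
  fixes L :: "nat set"
  assumes "infinite L"
  shows "card {y\<in>L. y < enumerate L n} = n"
proof (induction n)
  case 0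
  have "{y\<in>L. y < enumerate L 0} = {}"
    unfolding enumerate_0 by (auto dest: not_less_Least)
  then show ?case by simp
next
  case (Suc n)
  have "{y\<in>L. y < enumerate L (Suc n)} = insert (enumerate L n) {y\<in>L. y < enumerate L n}"
  proof -
    have "y < enumerate L (Suc n) \<longleftrightarrow> y \<le> enumerate L n" if "y \<in> L" for y
    proof
      assume "y < enumerate L (Suc n)"
      show "y \<le> enumerate L n"
      proof (rule ccontr)
        assume "\<not> y \<le> enumerate L n"
        then have "y \<in> L \<and> enumerate L n < y" using that by simp
        then have "(LEAST s. s \<in> L \<and> enumerate L n < s) \<le> y" by (rule Least_le)
        then show False using \<open>y < enumerate L (Suc n)\<close> enumerate_Suc''[OF assms, of n] by simp
      qed
    next
      assume "y \<le> enumerate L n" then show "y < enumerate L (Suc n)"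
        using enumerate_step[OF assms, of n] by simp
    qed
    then show ?thesis using enumerate_in_set[OF assms, of n] by auto
  qed
  then show ?case using Suc by simp
qed

lemma enum_split:
  fixes L :: "nat set"
  assumes "infinite L"
  shows "enumerate L n = n + card ({..<enumerate L n} - L)"
proof -
  let ?x = "enumerate L n"
  have "{..<?x} = {y\<in>L. y < ?x} \<union> ({..<?x} - L)" by auto
  moreover have "{y\<in>L. y < ?x} \<inter> ({..<?x} - L) = {}" by auto
  have fA: "finite {y\<in>L. y < ?x}" by simp
  have fB: "finite ({..<?x} - L)" by simp
  have "card ({y\<in>L. y < ?x} \<union> ({..<?x} - L)) = card {y\<in>L. y < ?x} + card ({..<?x} - L)"
    using card_Un_disjoint[OF fA fB] \<open>{y\<in>L. y < ?x} \<inter> ({..<?x} - L) = {}\<close> by blast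
  ultimately have "card {..<?x} = card {y\<in>L. y < ?x} + card ({..<?x} - L)"
    by simp
  then show ?thesis using card_below_enum[OF assms, of n] by simp
qed

lemma elem_large:
  assumes "numerical_semigroup L"
  shows "\<exists>k. \<forall>i\<ge>k. elem L i = i + genus L"
proof -
  have fin: "finite (UNIV - L)" using assms by (simp add: numerical_semigroup_def)
  have inf: "infinite L"
  proof
    assume "finite L"
    then have "finite (L \<union> (UNIV - L))" using fin by simp
    then show False by simp
  qed
  obtain N where N: "\<forall>x\<in>UNIV - L. x < N"
    using fin finite_nat_bounded by blast
  show ?thesis
  proof (intro exI allI impI)
    fix i assume "N \<le> i"
    then have "N \<le> enumerate L i" using le_enumerate[OF inf, of i] by simp
    then have "{..<enumerate L i} - L = UNIV - L"
    proof (intro set_eqI iffI)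
      fix x assume "x \<in> UNIV - L"
      then have "x < N" using N by blast
      then show "x \<in> {..<enumerate L i} - L" using \<open>x \<in> UNIV - L\<close> \<open>N \<le> enumerate L i\<close> by auto
    qed auto
    then show "elem L i = i + genus L"
      using enum_split[OF inf, of i] by (simp add: elem_def genus_def)
  qed
qed

lemma arA: fixes m S y :: nat assumes "m + 2 < S" "S < y"
  shows "\<exists>a b. a > m \<and> b > m \<and> a \<noteq> S \<and> b \<noteq> S \<and> y + m = a + b"
proof (cases "y - 1 = S")
  case True then show ?thesis using assms
    by (intro exI[of _ "m + 2"] exI[of _ "y - 2"]) auto
next
  case False then show ?thesis using assms
    by (intro exI[of _ "m + 1"] exI[of _ "y - 1"]) auto
qed
lemma arB: fixes m S :: nat assumes "S = m + 2"
  shows "{y. S < y \<and> \<not> (\<exists>a b. a > m \<and> b > m \<and> a \<noteq> S \<and> b \<noteq> S \<and> y + m = a + b)} = {S + 1}"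
proof (intro set_eqI iffI)
  fix y assume y: "y \<in> {y. S < y \<and> \<not> (\<exists>a b. a > m \<and> b > m \<and> a \<noteq> S \<and> b \<noteq> S \<and> y + m = a + b)}"
  show "y \<in> {S+1}"
  proof (rule ccontr)
    assume "y \<notin> {S+1}"
    then have "y > S + 1" using y by auto
    then have "\<exists>a b. a > m \<and> b > m \<and> a \<noteq> S \<and> b \<noteq> S \<and> y + m = a + b" using assms
      by (intro exI[of _ "m + 1"] exI[of _ "y - 1"]) auto
    then show False using y by blast
  qed
next
  fix y assume "y \<in> {S+1}"
  then show "y \<in> {y. S < y \<and> \<not> (\<exists>a b. a > m \<and> b > m \<and> a \<noteq> S \<and> b \<noteq> S \<and> y + m = a + b)}"
    using assms by auto
qed
lemma arC: fixes m S :: nat assumes "S = m + 1"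
  shows "{y. S < y \<and> \<not> (\<exists>a b. a > m \<and> b > m \<and> a \<noteq> S \<and> b \<noteq> S \<and> y + m = a + b)} = {S + 1, S + 2}"
proof (intro set_eqI iffI)
  fix y assume y: "y \<in> {y. S < y \<and> \<not> (\<exists>a b. a > m \<and> b > m \<and> a \<noteq> S \<and> b \<noteq> S \<and> y + m = a + b)}"
  show "y \<in> {S+1, S+2}"
  proof (rule ccontr)
    assume "y \<notin> {S+1, S+2}"
    then have "y > S + 2" using y by auto
    then have "\<exists>a b. a > m \<and> b > m \<and> a \<noteq> S \<and> b \<noteq> S \<and> y + m = a + b" using assms
      by (intro exI[of _ "m + 2"] exI[of _ "y - 2"]) auto
    then show False using y by blast
  qed
next
  fix y assume "y \<in> {S+1, S+2}"
  then show "y \<in> {y. S < y \<and> \<not> (\<exists>a b. a > m \<and> b > m \<and> a \<noteq> S \<and> b \<noteq> S \<and> y + m = a + b)}"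
    using assms by auto
qed

theorem lemma3:
  fixes L :: "nat set" and s i :: nat
  assumes "numerical_semigroup L"
    and "cond_index L \<le> s"
    and "generator L (elem L s)"
    and "cond_index L \<le> i" and "i < s"
  shows "(i + 2 < s \<longrightarrow> seeds L s i = {})
       \<and> (i + 2 = s \<longrightarrow> seeds L s i = {elem L s + 1})
       \<and> (i + 1 = s \<longrightarrow> seeds L s i = {elem L s + 1, elem L s + 2})"
proof -
  define g where "g = genus L"
  define K where "K = cond_index L"
  have fin: "finite (UNIV - L)" using assms(1) by (simp add: numerical_semigroup_def)
  have z: "0 \<in> L" using assms(1) by (simp add: numerical_semigroup_def)
  have inf: "infinite L"
  proof
    assume "finite L"
    then have "finite (L \<union> (UNIV - L))" using fin by simp
    then show False by simp
  qed
  have K: "\<forall>j\<ge>K. elem L j = j + g"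
    unfolding K_def g_def cond_index_def using elem_large[OF assms(1)] by (rule LeastI_ex)
  have e0: "elem L 0 = 0" using z by (simp add: elem_def enumerate_0 Least_eq_0)
  have mono: "\<And>a b. elem L a < elem L b \<longleftrightarrow> a < b" using inf by (simp add: elem_def)
  have inL: "\<And>j. elem L j \<in> L" using inf by (simp add: elem_def enumerate_in_set)
  have ex: "\<And>x. x \<in> L \<Longrightarrow> \<exists>n. elem L n = x" using inf by (simp add: elem_def enumerate_Ex)
  have Ei: "elem L i = i + g" using K assms(4) K_def by simp
  have Es: "elem L s = s + g" using K assms(2) K_def by simp
  have T: "x \<in> tilde_i L s i \<longleftrightarrow> x = 0 \<or> (x > i + g \<and> x \<noteq> s + g)" for x
  proof
    assume "x \<in> tilde_i L s i"
    then have xL: "x \<in> L" and nr: "\<And>j. 1 \<le> j \<Longrightarrow> j \<le> i \<Longrightarrow> x \<noteq> elem L j" and ns: "x \<noteq> s + g"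
      using Es by (auto simp: tilde_i_def)
    obtain n where n: "elem L n = x" using ex[OF xL] by blast
    show "x = 0 \<or> (x > i + g \<and> x \<noteq> s + g)"
    proof (cases "n = 0")
      case True then show ?thesis using n e0 by simp
    next
      case False
      have "n > i"
      proof (rule ccontr)
        assume "\<not> i < n" then show False using nr[of n] n False by simp
      qed
      then have "x > elem L i" using n mono by blast
      then show ?thesis using Ei ns by simp
    qed
  next
    assume h: "x = 0 \<or> (x > i + g \<and> x \<noteq> s + g)"
    show "x \<in> tilde_i L s i"
    proof (cases "x = 0")
      case True
      have "0 \<noteq> elem L j" if "1 \<le> j" for j using mono[of 0 j] e0 that by simp
      then show ?thesis using True z \<open>i < s\<close> by (auto simp: tilde_i_def)
    next
      case False
      then have x: "x > i + g" "x \<noteq> s + g" using h by auto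
      have "x - g \<ge> K" using x assms(4) K_def by simp
      then have ex': "elem L (x - g) = x" using K x by simp
      have "x \<noteq> elem L j" if "j \<le> i" for j
      proof -
        have "elem L j \<le> elem L i" using mono[of i j] that by linarith
        then show ?thesis using Ei x by simp
      qed
      then show ?thesis using inL[of "x - g"] ex' x Es by (auto simp: tilde_i_def)
    qed
  qed
  have gen: "generator (tilde_i L s i) n \<longleftrightarrow> n \<noteq> 0 \<and> n > i + g \<and> n \<noteq> s + g \<and>
      \<not> (\<exists>a b. a > i + g \<and> b > i + g \<and> a \<noteq> s + g \<and> b \<noteq> s + g \<and> n = a + b)" for n
    unfolding generator_def Bex_def T by auto
  have seedsE: "seeds L s i = {y. y > s + g \<and>
      \<not> (\<exists>a b. a > i + g \<and> b > i + g \<and> a \<noteq> s + g \<and> b \<noteq> s + g \<and> y + (i + g) = a + b)}"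
  proof (rule set_eqI, rule iffI)
    fix y assume "y \<in> seeds L s i"
    then obtain t where t: "t > s" "y = elem L t" "generator (tilde_i L s i) (elem L t + elem L i)"
      by (auto simp: seeds_def)
    have "y > s + g" using t mono[of s t] Es by simp
    then show "y \<in> {y. y > s + g \<and>
      \<not> (\<exists>a b. a > i + g \<and> b > i + g \<and> a \<noteq> s + g \<and> b \<noteq> s + g \<and> y + (i + g) = a + b)}"
      using t(3) unfolding gen t(2)[symmetric] Ei by blast
  next
    fix y assume y: "y \<in> {y. y > s + g \<and>
      \<not> (\<exists>a b. a > i + g \<and> b > i + g \<and> a \<noteq> s + g \<and> b \<noteq> s + g \<and> y + (i + g) = a + b)}"
    then have yg: "y > s + g" by simp
    then have "y - g \<ge> K" using assms(2) K_def by simp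
    then have "elem L (y - g) = y - g + g" using K by blast
    then have ey: "elem L (y - g) = y" using yg by simp
    have "y - g > s" using y by auto
    moreover have "generator (tilde_i L s i) (elem L (y - g) + elem L i)"
      unfolding ey Ei gen
      apply (intro conjI)
      using yg apply linarith
      using yg apply linarith
      using yg apply linarith
      using y apply blast
      done
    ultimately show "y \<in> seeds L s i" unfolding seeds_def mem_Collect_eq by (metis ey)
  qed
  show ?thesis
  proof (intro conjI impI)
    assume h: "i + 2 < s"
    have "i + g + 2 < s + g" using h by simp
    then have "\<And>y. s + g < y \<Longrightarrow> \<exists>a b. a > i + g \<and> b > i + g \<and> a \<noteq> s + g \<and> b \<noteq> s + g \<and> y + (i + g) = a + b"
      using arA[of "i + g" "s + g"] by blast
    then show "seeds L s i = {}" unfolding seedsE by blast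
  next
    assume h: "i + 2 = s"
    show "seeds L s i = {elem L s + 1}" unfolding seedsE Es using arB[of "s + g" "i + g"] h by simp
  next
    assume h: "i + 1 = s"
    show "seeds L s i = {elem L s + 1, elem L s + 2}" unfolding seedsE Es using arC[of "s + g" "i + g"] h by simp
  qed
qed

end
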